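(* Let $n\ge1$, $a\in\mathcal{IS}_n$, and consider the semigroup $(\mathcal{IS}_n,*_a)$. Let $x\in\mathcal{IS}_n$. If $\operatorname{ran}(x)\subseteq\operatorname{dom}(a)$, then the $\mathcal{R}$-class of $x$ is $$R_x=\{y\in\mathcal{IS}_n : \operatorname{dom}(y)=\operatorname{dom}(x),\ \operatorname{ran}(y)\subseteq\operatorname{dom}(a)\};$$ otherwise $R_x=\{x\}$.
   Context: $\mathcal{IS}_n$ is the set of all partial injective maps of $N=\{1,\dots,n\}$, including the empty map; $\operatorname{dom}(x)$, $\operatorname{ran}(x)$ denote domain and range. Maps are composed from left to right: $(xy)(i)=y(x(i))$, defined exactly when $i\in\operatorname{dom}(x)$ and $x(i)\in\operatorname{dom}(y)$. For fixed $a\in\mathcal{IS}_n$, $x*_a y:=xay$. Green's relations in a semigroup $S$: with $S^1$ the semigroup $S$ with an identity adjoined, $x\mathcal{L}y$ iff $S^1x=S^1y$, $x\mathcal{R}y$ iff $xS^1=yS^1$, $\mathcal{H}=\mathcal{L}\cap\mathcal{R}$, $\mathcal{D}=\mathcal{L}\circ\mathcal{R}$ (which equals $\mathcal{R}\circ\mathcal{L}$). $L_x,R_x,H_x,D_x$ denote the corresponding classes of $x$, here computed in $(\mathcal{IS}_n,*_a)$. *)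

theory Defs
  imports Main
begin

definition IS :: "nat \<Rightarrow> (nat \<rightharpoonup> nat) set" where
  "IS n = {x. dom x \<subseteq> {1..n} \<and> ran x \<subseteq> {1..n} \<and> inj_on x (dom x)}"

text \<open>Left-to-right composition: (x ; y)(i) = y(x(i)).\<close>
definition lcomp :: "(nat \<rightharpoonup> nat) \<Rightarrow> (nat \<rightharpoonup> nat) \<Rightarrow> (nat \<rightharpoonup> nat)" where
  "lcomp x y = y \<circ>\<^sub>m x"

definition sw :: "(nat \<rightharpoonup> nat) \<Rightarrow> (nat \<rightharpoonup> nat) \<Rightarrow> (nat \<rightharpoonup> nat) \<Rightarrow> (nat \<rightharpoonup> nat)" where
  "sw a x y = lcomp (lcomp x a) y"

definition right_ideal1 :: "nat \<Rightarrow> (nat \<rightharpoonup> nat) \<Rightarrow> (nat \<rightharpoonup> nat) \<Rightarrow> (nat \<rightharpoonup> nat) set" where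
  "right_ideal1 n a x = insert x {sw a x s | s. s \<in> IS n}"

definition Rclass :: "nat \<Rightarrow> (nat \<rightharpoonup> nat) \<Rightarrow> (nat \<rightharpoonup> nat) \<Rightarrow> (nat \<rightharpoonup> nat) set" where
  "Rclass n a x = {y \<in> IS n. right_ideal1 n a y = right_ideal1 n a x}"

end

theory Submission
  imports Defs
begin

lemma sw_apply: "sw a x s i = (case x i of None \<Rightarrow> None | Some k \<Rightarrow> (case a k of None \<Rightarrow> None | Some j \<Rightarrow> s j))"
  by (simp add: sw_def lcomp_def map_comp_def split: option.splits)

lemma sw_assoc: "sw a (sw a y s) t = sw a y (sw a s t)"
  by (rule ext) (simp add: sw_apply split: option.splits)

lemma sw_IS:
  assumes "a \<in> IS n" "x \<in> IS n" "s \<in> IS n"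
  shows "sw a x s \<in> IS n"
proof -
  have d: "dom (sw a x s) \<subseteq> dom x"
    by (auto simp: sw_apply split: option.splits)
  have r: "ran (sw a x s) \<subseteq> ran s"
    by (auto simp: ran_def sw_apply split: option.splits)
  have i: "inj_on (sw a x s) (dom (sw a x s))"
  proof (rule inj_onI)
    fix i i' assume "i \<in> dom (sw a x s)" "i' \<in> dom (sw a x s)" and e: "sw a x s i = sw a x s i'"
    then obtain k j k' j' v where "x i = Some k" "a k = Some j" "s j = Some v"
       "x i' = Some k'" "a k' = Some j'" "s j' = Some v"
      by (auto simp: sw_apply split: option.splits)
    moreover have "inj_on s (dom s)" "inj_on a (dom a)" "inj_on x (dom x)" using assms by (auto simp: IS_def)
    ultimately show "i = i'" by (metis domI inj_onD)
  qed
  show ?thesis using assms d r i unfolding IS_def by blast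
qed

lemma dom_sw: "i \<in> dom (sw a y s) \<Longrightarrow> i \<in> dom y \<and> the (y i) \<in> dom a"
  by (auto simp: sw_apply split: option.splits)

lemma construct:
  assumes a: "a \<in> IS n" and x: "x \<in> IS n" and y: "y \<in> IS n"
    and dxy: "dom x = dom y" and ry: "ran y \<subseteq> dom a"
  shows "\<exists>s\<in>IS n. sw a y s = x"
proof -
  define g where "g = a \<circ>\<^sub>m y"
  have ia: "inj_on a (dom a)" and ix: "inj_on x (dom x)" and iy: "inj_on y (dom y)"
    using a x y by (auto simp: IS_def)
  have ginj: "g i = Some j \<Longrightarrow> g i' = Some j \<Longrightarrow> i = i'" for i i' j
  proof -
    assume h: "g i = Some j" "g i' = Some j"
    obtain k where k: "y i = Some k" "a k = Some j"
      using h(1) by (cases "y i") (auto simp: g_def)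
    obtain k' where k': "y i' = Some k'" "a k' = Some j"
      using h(2) by (cases "y i'") (auto simp: g_def)
    have "k = k'" using inj_onD[OF ia] k k' by (simp add: domI)
    then have "y i = y i'" using k k' by simp
    then show ?thesis using inj_onD[OF iy] k k' by (simp add: domI)
  qed
  define s where "s = (\<lambda>j. if \<exists>i. g i = Some j then x (SOME i. g i = Some j) else None)"
  have sg: "g i = Some j \<Longrightarrow> s j = x i" for i j
  proof -
    assume h: "g i = Some j"
    hence ex: "\<exists>i. g i = Some j" by blast
    hence "g (SOME i. g i = Some j) = Some j" by (rule someI_ex)
    hence "(SOME i. g i = Some j) = i" using ginj h by blast
    thus ?thesis using ex by (simp add: s_def)
  qed
  have sdom: "j \<in> dom s \<Longrightarrow> \<exists>i. g i = Some j" for j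
    by (cases "\<exists>i. g i = Some j") (auto simp: s_def)
  have "dom s \<subseteq> ran a"
  proof
    fix j assume "j \<in> dom s"
    then obtain i where "g i = Some j" using sdom by blast
    then obtain k where "a k = Some j" by (cases "y i") (auto simp: g_def)
    then show "j \<in> ran a" by (auto simp: ran_def)
  qed
  hence ds: "dom s \<subseteq> {1..n}" using a by (auto simp: IS_def)
  have "ran s \<subseteq> ran x"
  proof
    fix v assume "v \<in> ran s"
    then obtain j where j: "s j = Some v" by (auto simp: ran_def)
    then obtain i where "g i = Some j" using sdom by blast
    then have "x i = Some v" using sg j by simp
    then show "v \<in> ran x" by (auto simp: ran_def)
  qed
  hence rs: "ran s \<subseteq> {1..n}" using x by (auto simp: IS_def)
  have is_: "inj_on s (dom s)"
  proof (rule inj_onI)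
    fix j j' assume jd: "j \<in> dom s" and jd': "j' \<in> dom s" and e: "s j = s j'"
    obtain i where gi: "g i = Some j" using sdom jd by blast
    obtain i' where gi': "g i' = Some j'" using sdom jd' by blast
    have xi: "s j = x i" "s j' = x i'" using sg gi gi' by auto
    have "i \<in> dom x" using jd xi by (metis domD domI)
    moreover have "i' \<in> dom x" using jd' xi by (metis domD domI)
    ultimately have "i = i'" using e xi inj_onD[OF ix] by simp
    then show "j = j'" using gi gi' by simp
  qed
  have sIS: "s \<in> IS n" using ds rs is_ by (simp add: IS_def)
  have "sw a y s = x"
  proof (rule ext)
    fix i show "sw a y s i = x i"
    proof (cases "y i")
      case None
      then have "x i = None" using dxy by auto
      with None show ?thesis by (simp add: sw_apply)
    next
      case (Some k)
      then have "k \<in> dom a" using ry by (auto simp: ran_def)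
      then obtain j where j: "a k = Some j" by auto
      then have "g i = Some j" using Some by (simp add: g_def)
      then show ?thesis using Some j sg by (simp add: sw_apply)
    qed
  qed
  with sIS show ?thesis by blast
qed

lemma ideal_sub:
  assumes a: "a \<in> IS n" and s: "s \<in> IS n" and x: "x = sw a y s"
  shows "right_ideal1 n a x \<subseteq> right_ideal1 n a y"
proof
  fix z assume "z \<in> right_ideal1 n a x"
  then consider "z = x" | t where "t \<in> IS n" "z = sw a x t" unfolding right_ideal1_def by blast
  then show "z \<in> right_ideal1 n a y"
  proof cases
    case 1 then show ?thesis using s x unfolding right_ideal1_def by blast
  next
    case 2
    then have "z = sw a y (sw a s t)" using x by (simp add: sw_assoc)
    moreover have "sw a s t \<in> IS n" using sw_IS a s 2 by blast
    ultimately show ?thesis unfolding right_ideal1_def by blast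
  qed
qed

theorem theorem4:
  fixes n :: nat and a x :: "nat \<rightharpoonup> nat"
  assumes "n \<ge> 1" and "a \<in> IS n" and "x \<in> IS n"
  shows "(ran x \<subseteq> dom a \<longrightarrow>
            Rclass n a x = {y \<in> IS n. dom y = dom x \<and> ran y \<subseteq> dom a})
       \<and> (\<not> ran x \<subseteq> dom a \<longrightarrow> Rclass n a x = {x})"
proof -
  have key: "dom y = dom x \<and> ran y \<subseteq> dom a \<and> ran x \<subseteq> dom a"
    if yR: "y \<in> Rclass n a x" and ne: "y \<noteq> x" for y
  proof -
    have eq: "right_ideal1 n a y = right_ideal1 n a x" using yR by (simp add: Rclass_def)
    have "x \<in> right_ideal1 n a x" by (simp add: right_ideal1_def)
    then have "x \<in> right_ideal1 n a y" using eq by simp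
    then obtain s where xs: "x = sw a y s" using ne unfolding right_ideal1_def by auto
    have "y \<in> right_ideal1 n a y" by (simp add: right_ideal1_def)
    then have "y \<in> right_ideal1 n a x" using eq by simp
    then obtain t where yt: "y = sw a x t" using ne unfolding right_ideal1_def by auto
    have d1: "dom x \<subseteq> dom y" using dom_sw xs by blast
    have d2: "dom y \<subseteq> dom x" using dom_sw yt by blast
    have r1: "ran y \<subseteq> dom a"
    proof
      fix k assume "k \<in> ran y"
      then obtain i where "y i = Some k" by (auto simp: ran_def)
      moreover then have "i \<in> dom x" using d2 by auto
      ultimately show "k \<in> dom a" using dom_sw xs by fastforce
    qed
    have r2: "ran x \<subseteq> dom a"
    proof
      fix k assume "k \<in> ran x"
      then obtain i where "x i = Some k" by (auto simp: ran_def)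
      moreover then have "i \<in> dom y" using d1 by auto
      ultimately show "k \<in> dom a" using dom_sw yt by fastforce
    qed
    show ?thesis using d1 d2 r1 r2 by blast
  qed
  have xR: "x \<in> Rclass n a x" using assms by (simp add: Rclass_def)
  show ?thesis
  proof (intro conjI impI)
    assume rx: "ran x \<subseteq> dom a"
    show "Rclass n a x = {y \<in> IS n. dom y = dom x \<and> ran y \<subseteq> dom a}"
    proof (intro equalityI subsetI)
      fix y assume h: "y \<in> Rclass n a x"
      then have "y \<in> IS n" by (simp add: Rclass_def)
      then show "y \<in> {y \<in> IS n. dom y = dom x \<and> ran y \<subseteq> dom a}"
        using key[OF h] rx by (cases "y = x") auto
    next
      fix y assume "y \<in> {y \<in> IS n. dom y = dom x \<and> ran y \<subseteq> dom a}"
      then have y: "y \<in> IS n" "dom y = dom x" "ran y \<subseteq> dom a" by auto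
      obtain s where "s \<in> IS n" "sw a y s = x" using construct[OF assms(2,3) y(1)] y by metis
      then have 1: "right_ideal1 n a x \<subseteq> right_ideal1 n a y" using ideal_sub assms by metis
      obtain t where "t \<in> IS n" "sw a x t = y" using construct[OF assms(2) y(1) assms(3)] y rx by metis
      then have 2: "right_ideal1 n a y \<subseteq> right_ideal1 n a x" using ideal_sub assms by metis
      show "y \<in> Rclass n a x" using 1 2 y by (simp add: Rclass_def)
    qed
  next
    assume "\<not> ran x \<subseteq> dom a"
    then show "Rclass n a x = {x}" using key xR by blast
  qed
qed

end
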